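(* Let $(X,d)$ be a metric space, $\mu$ a non-atomic Borel measure on $X$, $m$ a Borel measure on $X$, $0<p<\infty$, and $E\subset X$ a Borel set with $m(E)=0$. Then $\mathrm{Mod}_p(\Gamma_E^+)=0$, where $\Gamma_E^+=\{\gamma\in\Gamma^\mu:\mu(\mathrm{Im}(\gamma)\cap E)>0\}$.
   Context: A path is a continuous map $\gamma:[a,b]\to X$; a subpath is a restriction to a subinterval, trivial if that interval is a point; $\mathrm{Im}(\gamma)=\gamma([a,b])$. $\mu$ non-atomic: $\mu(\{x\})=0$ for all $x$. $\Gamma^\mu$ is the set of all non-trivial injective paths $\gamma$ with $0<\mu(\mathrm{Im}(\tilde\gamma))<\infty$ for every non-trivial subpath $\tilde\gamma$. For Borel $g\ge0$, $\int_\gamma g:=\int_{\mathrm{Im}(\gamma)}g\,d\mu$. For $\Gamma\subset\Gamma^\mu$, $\mathrm{Mod}_p(\Gamma)=\inf\int_Xg^p\,dm$ over Borel $g:X\to[0,\infty]$ with $\int_\gamma g\ge1$ for all $\gamma\in\Gamma$. *)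

theory Defs
  imports "HOL-Analysis.Analysis"
begin

text \<open>A path is represented by a triple (a, b, gamma) standing for the
  restriction of gamma to the parameter interval [a,b] (with a \<le> b).\<close>

type_synonym 'a path_t = "real \<times> real \<times> (real \<Rightarrow> 'a)"

definition is_path :: "'a::topological_space path_t \<Rightarrow> bool" where
  "is_path P \<longleftrightarrow> (case P of (a, b, g) \<Rightarrow> a \<le> b \<and> continuous_on {a..b} g)"

definition path_im :: "'a path_t \<Rightarrow> 'a set" where
  "path_im P = (case P of (a, b, g) \<Rightarrow> g ` {a..b})"

definition non_atomic :: "'a measure \<Rightarrow> bool" where
  "non_atomic M \<longleftrightarrow> (\<forall>x. emeasure M {x} = 0)"

definition Gamma_mu :: "'a::topological_space measure \<Rightarrow> 'a path_t set" where
  "Gamma_mu M = {(a, b, g) | a b g. is_path (a, b, g) \<and> a < b \<and> inj_on g {a..b} \<and>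
      (\<forall>c d. a \<le> c \<and> c < d \<and> d \<le> b \<longrightarrow>
         0 < emeasure M (g ` {c..d}) \<and> emeasure M (g ` {c..d}) < \<infinity>)}"

definition line_int :: "'a measure \<Rightarrow> 'a path_t \<Rightarrow> ('a \<Rightarrow> ennreal) \<Rightarrow> ennreal" where
  "line_int M P g = set_nn_integral M (path_im P) g"

definition enn_powr :: "ennreal \<Rightarrow> real \<Rightarrow> ennreal" where
  "enn_powr x p = (if x = \<infinity> then \<infinity> else ennreal (enn2real x powr p))"

definition Mod_p :: "'a::topological_space measure \<Rightarrow> 'a measure \<Rightarrow> real \<Rightarrow> 'a path_t set \<Rightarrow> ennreal" where
  "Mod_p M m p \<Gamma> = (INF g \<in> {g. g \<in> borel_measurable borel \<and> (\<forall>P\<in>\<Gamma>. line_int M P g \<ge> 1)}.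
       \<integral>\<^sup>+ x. enn_powr (g x) p \<partial>m)"

end

theory Submission
  imports Defs
begin

theorem lemma3p4:
  fixes \<mu> m :: "'a::metric_space measure" and p :: real and E :: "'a set"
  assumes "sets \<mu> = sets borel" and "non_atomic \<mu>"
    and "sets m = sets borel"
    and "0 < p"
    and "E \<in> sets borel" and "emeasure m E = 0"
  shows "Mod_p \<mu> m p {P \<in> Gamma_mu \<mu>. emeasure \<mu> (path_im P \<inter> E) > 0} = 0"
proof -
  define g :: "'a \<Rightarrow> ennreal" where "g = (\<lambda>x. \<infinity> * indicator E x)"
  have gm: "g \<in> borel_measurable borel" unfolding g_def using assms(5) by measurable
  have line: "line_int \<mu> P g \<ge> 1" if P: "P \<in> Gamma_mu \<mu>" "emeasure \<mu> (path_im P \<inter> E) > 0" for P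
  proof -
    obtain a b h where Pe: "P = (a, b, h)" "continuous_on {a..b} h"
      using P(1) unfolding Gamma_mu_def is_path_def by auto
    have "compact (h ` {a..b})" using Pe(2) compact_continuous_image by blast
    hence "closed (path_im P)" using Pe(1) by (simp add: path_im_def compact_imp_closed)
    hence "path_im P \<inter> E \<in> sets \<mu>" using assms(1,5) by auto
    have "line_int \<mu> P g = (\<integral>\<^sup>+x. \<infinity> * indicator (path_im P \<inter> E) x \<partial>\<mu>)"
      unfolding line_int_def g_def
      by (intro nn_integral_cong) (auto simp: indicator_def)
    also have "\<dots> = \<infinity> * emeasure \<mu> (path_im P \<inter> E)"
      using \<open>path_im P \<inter> E \<in> sets \<mu>\<close> by (rule nn_integral_cmult_indicator)
    also have "\<dots> = \<infinity>" using P(2) by (simp add: ennreal_mult_eq_top_iff)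
    finally show ?thesis by simp
  qed
  have "(\<integral>\<^sup>+ x. enn_powr (g x) p \<partial>m) = (\<integral>\<^sup>+ x. \<infinity> * indicator E x \<partial>m)"
    by (intro nn_integral_cong) (auto simp: g_def enn_powr_def indicator_def)
  also have "\<dots> = 0" using assms(3,5,6) by (simp add: nn_integral_cmult_indicator)
  finally have z: "(\<integral>\<^sup>+ x. enn_powr (g x) p \<partial>m) = 0" .
  have "Mod_p \<mu> m p {P \<in> Gamma_mu \<mu>. emeasure \<mu> (path_im P \<inter> E) > 0} \<le> (\<integral>\<^sup>+ x. enn_powr (g x) p \<partial>m)"
    unfolding Mod_p_def using gm line by (intro INF_lower) auto
  thus ?thesis using z by simp
qed

end
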